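(* Let $A$ be a finite alphabet, $k \ge 1$, and let $f, g : A^* \to \mathbb{N}$ be $k$-repetitive. Then $f+g$ and the Hadamard product $f \cdot g$ (defined by $(f\cdot g)(w) = f(w)g(w)$) are $k$-repetitive.
   Context: For $k \ge 1$, a function $f : A^* \to \mathbb{N}$ is $k$-repetitive if there exists an integer $\omega_0 \ge 1$ such that for all words $\alpha, \beta, \alpha_0, u_1, \alpha_1, \dots, u_k, \alpha_k \in A^*$ and every positive multiple $\omega$ of $\omega_0$, setting $W(Z_1,\dots,Z_k) = \alpha_0 \prod_{i=1}^k u_i^{\omega Z_i} \alpha_i$ and $w = W(1,\dots,1)$, there exists a function $F : \mathbb{N}^k \to \mathbb{N}$ such that for all integers $X_1,\dots,X_k,Y_1,\dots,Y_k \ge 3$, $f(\alpha\, w^{2\omega-1} W(X_1,\dots,X_k)\, w^{\omega-1}\, W(Y_1,\dots,Y_k)\, w^{\omega}\, \beta) = F(X_1+Y_1, \dots, X_k+Y_k)$. *)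

theory Defs
  imports Main
begin

definition wpow :: "'a list \<Rightarrow> nat \<Rightarrow> 'a list" where
  "wpow u n = concat (replicate n u)"

text \<open>W(Z_1,...,Z_k) = alpha_0 u_1^(omega Z_1) alpha_1 ... u_k^(omega Z_k) alpha_k,
  with alpha_i = as i (i = 0..k), u_i = us i (i = 1..k), Z_i = Z i.\<close>

definition Wword :: "nat \<Rightarrow> nat \<Rightarrow> (nat \<Rightarrow> 'a list) \<Rightarrow> (nat \<Rightarrow> 'a list)
     \<Rightarrow> (nat \<Rightarrow> nat) \<Rightarrow> 'a list" where
  "Wword k \<omega> as us Z = as 0 @ concat (map (\<lambda>i. wpow (us i) (\<omega> * Z i) @ as i) [1..<k+1])"

definition k_repetitive :: "nat \<Rightarrow> ('a list \<Rightarrow> nat) \<Rightarrow> bool" where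
  "k_repetitive k f \<longleftrightarrow>
     (\<exists>\<omega>0::nat. \<omega>0 \<ge> 1 \<and>
       (\<forall>(\<alpha>::'a list) (\<beta>::'a list) (as::nat \<Rightarrow> 'a list) (us::nat \<Rightarrow> 'a list) (\<omega>::nat).
          (\<omega> > 0 \<and> \<omega>0 dvd \<omega>) \<longrightarrow>
          (let w = Wword k \<omega> as us (\<lambda>_. 1) in
           \<exists>F :: nat list \<Rightarrow> nat.
             \<forall>X Y :: nat \<Rightarrow> nat. (\<forall>i\<in>{1..k}. X i \<ge> 3 \<and> Y i \<ge> 3) \<longrightarrow>
               f (\<alpha> @ wpow w (2*\<omega> - 1) @ Wword k \<omega> as us X @ wpow w (\<omega> - 1)
                    @ Wword k \<omega> as us Y @ wpow w \<omega> @ \<beta>)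
               = F (map (\<lambda>i. X i + Y i) [1..<k+1]))))"

end

theory Submission
  imports Defs
begin

lemma rep_comb:
  assumes "k_repetitive k f" and "k_repetitive k g"
  shows "k_repetitive k (\<lambda>w. op (f w) (g w))"
proof -
  obtain a where a: "a \<ge> 1" and fa: "\<forall>(\<alpha>::'a list) (\<beta>::'a list) (as::nat \<Rightarrow> 'a list) (us::nat \<Rightarrow> 'a list) (\<omega>::nat).
          (\<omega> > 0 \<and> a dvd \<omega>) \<longrightarrow>
          (let w = Wword k \<omega> as us (\<lambda>_. 1) in
           \<exists>F :: nat list \<Rightarrow> nat.
             \<forall>X Y :: nat \<Rightarrow> nat. (\<forall>i\<in>{1..k}. X i \<ge> 3 \<and> Y i \<ge> 3) \<longrightarrow>
               f (\<alpha> @ wpow w (2*\<omega> - 1) @ Wword k \<omega> as us X @ wpow w (\<omega> - 1)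
                    @ Wword k \<omega> as us Y @ wpow w \<omega> @ \<beta>)
               = F (map (\<lambda>i. X i + Y i) [1..<k+1]))"
    using assms(1) unfolding k_repetitive_def by blast
  obtain b where b: "b \<ge> 1" and gb: "\<forall>(\<alpha>::'a list) (\<beta>::'a list) (as::nat \<Rightarrow> 'a list) (us::nat \<Rightarrow> 'a list) (\<omega>::nat).
          (\<omega> > 0 \<and> b dvd \<omega>) \<longrightarrow>
          (let w = Wword k \<omega> as us (\<lambda>_. 1) in
           \<exists>F :: nat list \<Rightarrow> nat.
             \<forall>X Y :: nat \<Rightarrow> nat. (\<forall>i\<in>{1..k}. X i \<ge> 3 \<and> Y i \<ge> 3) \<longrightarrow>
               g (\<alpha> @ wpow w (2*\<omega> - 1) @ Wword k \<omega> as us X @ wpow w (\<omega> - 1)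
                    @ Wword k \<omega> as us Y @ wpow w \<omega> @ \<beta>)
               = F (map (\<lambda>i. X i + Y i) [1..<k+1]))"
    using assms(2) unfolding k_repetitive_def by blast
  show ?thesis
    unfolding k_repetitive_def
  proof (intro exI[of _ "a*b"] conjI allI impI)
    show "1 \<le> a * b" using a b by simp
    fix \<alpha> \<beta> :: "'a list" and as us :: "nat \<Rightarrow> 'a list" and \<omega> :: nat
    assume h: "0 < \<omega> \<and> a * b dvd \<omega>"
    then have ha: "0 < \<omega> \<and> a dvd \<omega>" and hb: "0 < \<omega> \<and> b dvd \<omega>"
      using dvd_mult_left dvd_mult_right by blast+
    obtain F1 where F1: "\<forall>X Y :: nat \<Rightarrow> nat. (\<forall>i\<in>{1..k}. X i \<ge> 3 \<and> Y i \<ge> 3) \<longrightarrow>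
               f (\<alpha> @ wpow (Wword k \<omega> as us (\<lambda>_. 1)) (2*\<omega> - 1) @ Wword k \<omega> as us X @ wpow (Wword k \<omega> as us (\<lambda>_. 1)) (\<omega> - 1)
                    @ Wword k \<omega> as us Y @ wpow (Wword k \<omega> as us (\<lambda>_. 1)) \<omega> @ \<beta>)
               = F1 (map (\<lambda>i. X i + Y i) [1..<k+1])"
      using fa ha unfolding Let_def by blast
    obtain F2 where F2: "\<forall>X Y :: nat \<Rightarrow> nat. (\<forall>i\<in>{1..k}. X i \<ge> 3 \<and> Y i \<ge> 3) \<longrightarrow>
               g (\<alpha> @ wpow (Wword k \<omega> as us (\<lambda>_. 1)) (2*\<omega> - 1) @ Wword k \<omega> as us X @ wpow (Wword k \<omega> as us (\<lambda>_. 1)) (\<omega> - 1)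
                    @ Wword k \<omega> as us Y @ wpow (Wword k \<omega> as us (\<lambda>_. 1)) \<omega> @ \<beta>)
               = F2 (map (\<lambda>i. X i + Y i) [1..<k+1])"
      using gb hb unfolding Let_def by blast
    show "let w = Wword k \<omega> as us (\<lambda>_. 1) in
           \<exists>F :: nat list \<Rightarrow> nat.
             \<forall>X Y :: nat \<Rightarrow> nat. (\<forall>i\<in>{1..k}. X i \<ge> 3 \<and> Y i \<ge> 3) \<longrightarrow>
               op (f (\<alpha> @ wpow w (2*\<omega> - 1) @ Wword k \<omega> as us X @ wpow w (\<omega> - 1)
                    @ Wword k \<omega> as us Y @ wpow w \<omega> @ \<beta>))
                  (g (\<alpha> @ wpow w (2*\<omega> - 1) @ Wword k \<omega> as us X @ wpow w (\<omega> - 1)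
                    @ Wword k \<omega> as us Y @ wpow w \<omega> @ \<beta>))
               = F (map (\<lambda>i. X i + Y i) [1..<k+1])"
      unfolding Let_def
      proof (intro exI[of _ "\<lambda>l. op (F1 l) (F2 l)"] allI impI)
        fix X Y :: "nat \<Rightarrow> nat" assume hx: "\<forall>i\<in>{1..k}. X i \<ge> 3 \<and> Y i \<ge> 3"
        show "op (f (\<alpha> @ wpow (Wword k \<omega> as us (\<lambda>_. 1)) (2*\<omega> - 1) @ Wword k \<omega> as us X @ wpow (Wword k \<omega> as us (\<lambda>_. 1)) (\<omega> - 1)
                    @ Wword k \<omega> as us Y @ wpow (Wword k \<omega> as us (\<lambda>_. 1)) \<omega> @ \<beta>))
                  (g (\<alpha> @ wpow (Wword k \<omega> as us (\<lambda>_. 1)) (2*\<omega> - 1) @ Wword k \<omega> as us X @ wpow (Wword k \<omega> as us (\<lambda>_. 1)) (\<omega> - 1)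
                    @ Wword k \<omega> as us Y @ wpow (Wword k \<omega> as us (\<lambda>_. 1)) \<omega> @ \<beta>))
               = op (F1 (map (\<lambda>i. X i + Y i) [1..<k+1])) (F2 (map (\<lambda>i. X i + Y i) [1..<k+1]))"
          by (simp only: F1[THEN spec, THEN spec, THEN mp, OF hx] F2[THEN spec, THEN spec, THEN mp, OF hx])
      qed
  qed
qed

theorem mainTheorem3:
  fixes f g :: "('a::finite) list \<Rightarrow> nat" and k :: nat
  assumes "k \<ge> 1" and "k_repetitive k f" and "k_repetitive k g"
  shows "k_repetitive k (\<lambda>w. f w + g w) \<and> k_repetitive k (\<lambda>w. f w * g w)"
  using rep_comb[OF assms(2,3), of "(+)"] rep_comb[OF assms(2,3), of "(*)"] by simp

end
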